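(* Consider the constrained imperfect SIR model described in the context. Along any barrier integral curve $(S,I)$ of the MRPI set, with nonzero absolutely continuous adjoint $\lambda=(\lambda_1,\lambda_2)^T$ satisfying $\dot\lambda=\begin{pmatrix}\hat\beta(I)I & -\hat\beta(I)I\\ \alpha(I)S & -\alpha(I)S+\gamma\end{pmatrix}\lambda$, $\lambda(\bar t)=(0,1)^T$, and input $\bar\gamma(t)=\gamma_{\min}$ if $\lambda_2(t)>0$, $\gamma_{\max}$ if $\lambda_2(t)<0$ (arbitrary if $=0$), and such that its endpoint $z=(z_1,z_2)=(S(\bar t),I(\bar t))$ satisfies $z_1\neq0$ and the parameters satisfy $2\beta_{\min}>\beta_{\max}$, the input $\bar\gamma$ only switches at isolated points in time (i.e. $\lambda_2$ does not vanish identically on any nonempty open time interval).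
   Context: Imperfect SIR model: fix $0<\beta_{\min}\le\beta_{\max}$, $0<\gamma_{\min}\le\gamma_{\max}$, $I_{\max}\in(0,1]$, and the pre-designed feedback $\hat\beta(I)=\frac{\beta_{\min}-\beta_{\max}}{I_{\max}}I+\beta_{\max}$. State $x=(S,I)\in\mathbb{R}^2$; the unknown parameter is a Lebesgue measurable disturbance $\gamma:[t_0,\infty[\to[\gamma_{\min},\gamma_{\max}]$; dynamics $\dot S=-\hat\beta(I)SI$, $\dot I=\hat\beta(I)SI-\gamma I$, written $\dot x=f(x,\gamma)$, with constraint $g(x)=I-I_{\max}\le0$. Here $\alpha(I)=2\frac{\beta_{\min}-\beta_{\max}}{I_{\max}}I+\beta_{\max}$, and the displayed adjoint is $\dot\lambda=-(\partial f/\partial x)^T\lambda$; the rule for $\bar\gamma$ maximizes the Hamiltonian $\lambda^Tf$ over $\gamma$. A barrier integral curve reaches $\{I=I_{\max}\}$ tangentially at time $\bar t$ with these adjoint and input conditions, and lies in $\{0\le I\le I_{\max}\}$. *)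

theory Defs
  imports "HOL-Analysis.Analysis"
begin

definition beta_hat :: "real \<Rightarrow> real \<Rightarrow> real \<Rightarrow> real \<Rightarrow> real" where
  "beta_hat bmin bmax Imax I = (bmin - bmax) / Imax * I + bmax"

definition alpha_fun :: "real \<Rightarrow> real \<Rightarrow> real \<Rightarrow> real \<Rightarrow> real" where
  "alpha_fun bmin bmax Imax I = 2 * ((bmin - bmax) / Imax) * I + bmax"

definition abs_cont_on :: "real \<Rightarrow> real \<Rightarrow> (real \<Rightarrow> real) \<Rightarrow> bool" where
  "abs_cont_on a b f \<longleftrightarrow>
     (\<forall>e>0. \<exists>d>0. \<forall>(n::nat) (x::nat \<Rightarrow> real) (y::nat \<Rightarrow> real).
        (\<forall>i<n. a \<le> x i \<and> x i \<le> y i \<and> y i \<le> b) \<and>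
        (\<forall>i<n. \<forall>j<n. i < j \<longrightarrow> y i \<le> x j) \<and>
        (\<Sum>i<n. y i - x i) < d
        \<longrightarrow> (\<Sum>i<n. \<bar>f (y i) - f (x i)\<bar>) < e)"

end

theory Submission
  imports Defs "HOL-Analysis.Analysis"
begin

lemma ac_sum_set:
  fixes f :: "real \<Rightarrow> real"
  assumes ac: "abs_cont_on a b f" and e: "e > 0"
  shows "\<exists>d>0. \<forall>(X::'j set) x y. finite X \<longrightarrow> (\<forall>i\<in>X. a \<le> x i \<and> x i < y i \<and> y i \<le> b) \<longrightarrow>
      (\<forall>i\<in>X. \<forall>j\<in>X. i \<noteq> j \<longrightarrow> {x i<..<y i} \<inter> {x j<..<y j} = {}) \<longrightarrow>
      (\<Sum>i\<in>X. y i - x i) < d \<longrightarrow> (\<Sum>i\<in>X. \<bar>f (y i) - f (x i)\<bar>) < e"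
proof -
  obtain d where d: "d > 0" and dd: "\<forall>(n::nat) (xs::nat \<Rightarrow> real) ys.
        (\<forall>i<n. a \<le> xs i \<and> xs i \<le> ys i \<and> ys i \<le> b) \<and>
        (\<forall>i<n. \<forall>j<n. i < j \<longrightarrow> ys i \<le> xs j) \<and>
        (\<Sum>i<n. ys i - xs i) < d
        \<longrightarrow> (\<Sum>i<n. \<bar>f (ys i) - f (xs i)\<bar>) < e"
    using ac e unfolding abs_cont_on_def by blast
  show ?thesis
  proof (intro exI[of _ d] conjI allI impI)
    show "d > 0" by (rule d)
    fix X :: "'j set" and x y :: "'j \<Rightarrow> real"
    assume fin: "finite X" and rng: "\<forall>i\<in>X. a \<le> x i \<and> x i < y i \<and> y i \<le> b"
    assume disj: "\<forall>i\<in>X. \<forall>j\<in>X. i \<noteq> j \<longrightarrow> {x i<..<y i} \<inter> {x j<..<y j} = {}"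
    assume sm: "(\<Sum>i\<in>X. y i - x i) < d"
    have key: "y i \<le> x j" if "i \<in> X" "j \<in> X" "i \<noteq> j" "x i \<le> x j" for i j
    proof (rule ccontr)
      assume "\<not> y i \<le> x j"
      define q where "q = (x j + min (y i) (y j)) / 2"
      have "q \<in> {x i<..<y i} \<inter> {x j<..<y j}" using rng that \<open>\<not> y i \<le> x j\<close>
        unfolding q_def by auto
      then show False using disj that by blast
    qed
    have inj: "inj_on x X"
    proof (rule inj_onI)
      fix i j assume "i \<in> X" "j \<in> X" "x i = x j"
      show "i = j"
      proof (rule ccontr)
        assume "i \<noteq> j"
        then have "y i \<le> x j" using key[of i j] \<open>i \<in> X\<close> \<open>j \<in> X\<close> \<open>x i = x j\<close> by simp
        moreover have "x i < y i" using rng \<open>i \<in> X\<close> by blast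
        ultimately show False using \<open>x i = x j\<close> by linarith
      qed
    qed
    define L where "L = sorted_list_of_set (x ` X)"
    define n where "n = length L"
    define g where "g = inv_into X x"
    have setL: "set L = x ` X" and distL: "distinct L" and sL: "sorted_wrt (<) L"
      using fin by (auto simp: L_def)
    have gX: "g (L ! k) \<in> X" "x (g (L ! k)) = L ! k" if "k < n" for k
    proof -
      have "L ! k \<in> set L" using that n_def by simp
      then have "L ! k \<in> x ` X" using setL by simp
      then show "g (L ! k) \<in> X" "x (g (L ! k)) = L ! k"
        unfolding g_def by (auto simp: inv_into_into f_inv_into_f)
    qed
    define xs where "xs k = x (g (L ! k))" for k
    define ys where "ys k = y (g (L ! k))" for k
    have sumconv: "(\<Sum>k<n. h (g (L ! k))) = (\<Sum>i\<in>X. h i)" for h :: "'j \<Rightarrow> real"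
    proof -
      have "(\<Sum>k<n. h (g (L ! k))) = sum_list (map (h \<circ> g) L)"
        by (simp add: sum_list_sum_nth n_def atLeast0LessThan)
      also have "\<dots> = sum (h \<circ> g) (x ` X)" using distL setL
        by (metis sum_list_distinct_conv_sum_set)
      also have "\<dots> = sum (h \<circ> g \<circ> x) X" using inj by (simp add: sum.reindex)
      also have "\<dots> = (\<Sum>i\<in>X. h i)" using inj unfolding g_def
        by (intro sum.cong) auto
      finally show ?thesis .
    qed
    have c1: "\<forall>k<n. a \<le> xs k \<and> xs k \<le> ys k \<and> ys k \<le> b"
    proof (intro allI impI)
      fix k assume "k < n"
      then have "g (L ! k) \<in> X" by (rule gX)
      then have "a \<le> x (g (L ! k)) \<and> x (g (L ! k)) < y (g (L ! k)) \<and> y (g (L ! k)) \<le> b" using rng by blast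
      then show "a \<le> xs k \<and> xs k \<le> ys k \<and> ys k \<le> b" unfolding xs_def ys_def by simp
    qed
    have c2: "\<forall>k<n. \<forall>j<n. k < j \<longrightarrow> ys k \<le> xs j"
    proof (intro allI impI)
      fix k j assume "k < n" "j < n" "k < j"
      then have lt: "L ! k < L ! j" using sL n_def sorted_wrt_nth_less by blast
      have xk: "x (g (L ! k)) = L ! k" "g (L ! k) \<in> X" using gX \<open>k<n\<close> by auto
      have xj: "x (g (L ! j)) = L ! j" "g (L ! j) \<in> X" using gX \<open>j<n\<close> by auto
      have ne: "g (L ! k) \<noteq> g (L ! j)"
      proof
        assume "g (L ! k) = g (L ! j)"
        then have "L ! k = L ! j" using xk xj by metis
        then show False using lt by simp
      qed
      have "x (g (L ! k)) \<le> x (g (L ! j))" using xk xj lt by simp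
      then have "y (g (L ! k)) \<le> x (g (L ! j))" using key[OF xk(2) xj(2) ne] by blast
      then show "ys k \<le> xs j" unfolding xs_def ys_def .
    qed
    have c3: "(\<Sum>k<n. ys k - xs k) < d"
      using sm sumconv[of "\<lambda>i. y i - x i"] unfolding xs_def ys_def by simp
    have "(\<Sum>k<n. \<bar>f (ys k) - f (xs k)\<bar>) < e" using dd c1 c2 c3 by blast
    then show "(\<Sum>i\<in>X. \<bar>f (y i) - f (x i)\<bar>) < e"
      using sumconv[of "\<lambda>i. \<bar>f (y i) - f (x i)\<bar>"] unfolding xs_def ys_def by simp
  qed
qed


lemma lip:
  fixes f D :: "real \<Rightarrow> real"
  assumes ab: "a \<le> b" and ac: "abs_cont_on a b f" and negN: "negligible N" and M: "0 \<le> M"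
    and der: "\<And>t. t \<in> {a..b} \<Longrightarrow> t \<notin> N \<Longrightarrow>
        (f has_real_derivative D t) (at t within {a..b}) \<and> \<bar>D t\<bar> \<le> M"
  shows "\<bar>f b - f a\<bar> \<le> M * (b - a)"
proof -
  have main: "\<bar>f b - f a\<bar> \<le> (M + \<epsilon>) * (b - a) + \<epsilon>" if ep: "\<epsilon> > 0" for \<epsilon>
  proof -
    have "\<exists>d>0. \<forall>(X::(real \<times> real set) set) x y. finite X \<longrightarrow> (\<forall>i\<in>X. a \<le> x i \<and> x i < y i \<and> y i \<le> b) \<longrightarrow>
      (\<forall>i\<in>X. \<forall>j\<in>X. i \<noteq> j \<longrightarrow> {x i<..<y i} \<inter> {x j<..<y j} = {}) \<longrightarrow>
      (\<Sum>i\<in>X. y i - x i) < d \<longrightarrow> (\<Sum>i\<in>X. \<bar>f (y i) - f (x i)\<bar>) < \<epsilon>"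
      by (rule ac_sum_set[OF ac ep])
    then obtain d where d: "d > 0" and dd0: "\<forall>(X::(real \<times> real set) set) x y. finite X \<longrightarrow> (\<forall>i\<in>X. a \<le> x i \<and> x i < y i \<and> y i \<le> b) \<longrightarrow>
      (\<forall>i\<in>X. \<forall>j\<in>X. i \<noteq> j \<longrightarrow> {x i<..<y i} \<inter> {x j<..<y j} = {}) \<longrightarrow>
      (\<Sum>i\<in>X. y i - x i) < d \<longrightarrow> (\<Sum>i\<in>X. \<bar>f (y i) - f (x i)\<bar>) < \<epsilon>"
      by blast
    note dd = dd0[rule_format]
    have "(indicat_real N has_integral 0) (cbox a b)" using negN by (simp add: negligible_def)
    then have "\<forall>e>0. \<exists>\<gamma>. gauge \<gamma> \<and> (\<forall>p. p tagged_division_of cbox a b \<and> \<gamma> fine p \<longrightarrow>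
        norm ((\<Sum>(x, k)\<in>p. Henstock_Kurzweil_Integration.content k *\<^sub>R indicat_real N x) - 0) < e)"
      by (simp only: has_integral)
    from this[rule_format, OF d] obtain \<gamma>1 where g1: "gauge \<gamma>1" and g1p': "\<forall>p. p tagged_division_of cbox a b \<and> \<gamma>1 fine p \<longrightarrow>
        norm ((\<Sum>(x, k)\<in>p. Henstock_Kurzweil_Integration.content k *\<^sub>R indicat_real N x) - 0) < d"
      by blast
    have g1p: "norm ((\<Sum>(x, k)\<in>p. Henstock_Kurzweil_Integration.content k *\<^sub>R indicat_real N x) - 0) < d"
      if "p tagged_division_of cbox a b" "\<gamma>1 fine p" for p
      using g1p'[rule_format, OF conjI[OF that]] .
    have "\<forall>t. \<exists>r>0. t \<in> {a..b} \<and> t \<notin> N \<longrightarrow>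
       (\<forall>s\<in>{a..b}. \<bar>s - t\<bar> < r \<longrightarrow> \<bar>f s - f t - D t * (s - t)\<bar> \<le> \<epsilon> * \<bar>s - t\<bar>)"
    proof
      fix t show "\<exists>r>0. t \<in> {a..b} \<and> t \<notin> N \<longrightarrow>
       (\<forall>s\<in>{a..b}. \<bar>s - t\<bar> < r \<longrightarrow> \<bar>f s - f t - D t * (s - t)\<bar> \<le> \<epsilon> * \<bar>s - t\<bar>)"
      proof (cases "t \<in> {a..b} \<and> t \<notin> N")
        case True
        then have "(f has_derivative (*) (D t)) (at t within {a..b})"
          using der[of t] True unfolding has_field_derivative_def by simp
        then have "(\<forall>e>0. \<exists>d>0. \<forall>y\<in>{a..b}. norm (y - t) < d \<longrightarrow>
            norm (f y - f t - D t * (y - t)) \<le> e * norm (y - t))"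
          unfolding has_derivative_within_alt by (rule conjunct2)
        from this[rule_format, OF ep] obtain r where "r > 0" "\<forall>s\<in>{a..b}. norm (s - t) < r \<longrightarrow>
            norm (f s - f t - D t * (s - t)) \<le> \<epsilon> * norm (s - t)"
          by blast
        then have "r > 0 \<and> (t \<in> {a..b} \<and> t \<notin> N \<longrightarrow>
       (\<forall>s\<in>{a..b}. \<bar>s - t\<bar> < r \<longrightarrow> \<bar>f s - f t - D t * (s - t)\<bar> \<le> \<epsilon> * \<bar>s - t\<bar>))" by simp
        then show ?thesis by (rule exI)
      next
        case False
        then have "(1::real) > 0 \<and> (t \<in> {a..b} \<and> t \<notin> N \<longrightarrow>
       (\<forall>s\<in>{a..b}. \<bar>s - t\<bar> < 1 \<longrightarrow> \<bar>f s - f t - D t * (s - t)\<bar> \<le> \<epsilon> * \<bar>s - t\<bar>))" by auto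
        then show ?thesis by (rule exI)
      qed
    qed
    then have "\<exists>r. \<forall>t. r t > 0 \<and> (t \<in> {a..b} \<and> t \<notin> N \<longrightarrow>
       (\<forall>s\<in>{a..b}. \<bar>s - t\<bar> < r t \<longrightarrow> \<bar>f s - f t - D t * (s - t)\<bar> \<le> \<epsilon> * \<bar>s - t\<bar>))"
      by (rule choice)
    then obtain r where R: "\<forall>t. r t > 0 \<and> (t \<in> {a..b} \<and> t \<notin> N \<longrightarrow>
       (\<forall>s\<in>{a..b}. \<bar>s - t\<bar> < r t \<longrightarrow> \<bar>f s - f t - D t * (s - t)\<bar> \<le> \<epsilon> * \<bar>s - t\<bar>))"
      by (elim exE) (rule that)
    have r: "r t > 0" for t using spec[OF R, of t] by (rule conjunct1)
    have rr: "\<bar>f s - f t - D t * (s - t)\<bar> \<le> \<epsilon> * \<bar>s - t\<bar>"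
      if "t \<in> {a..b}" "t \<notin> N" "s \<in> {a..b}" "\<bar>s - t\<bar> < r t" for t s
    proof -
      have "t \<in> {a..b} \<and> t \<notin> N \<longrightarrow>
       (\<forall>s\<in>{a..b}. \<bar>s - t\<bar> < r t \<longrightarrow> \<bar>f s - f t - D t * (s - t)\<bar> \<le> \<epsilon> * \<bar>s - t\<bar>)"
        using spec[OF R, of t] by (rule conjunct2)
      then have "\<forall>s\<in>{a..b}. \<bar>s - t\<bar> < r t \<longrightarrow> \<bar>f s - f t - D t * (s - t)\<bar> \<le> \<epsilon> * \<bar>s - t\<bar>"
        using that(1,2) by simp
      then show ?thesis using that(3,4) by simp
    qed
    have g: "gauge (\<lambda>t. \<gamma>1 t \<inter> ball t (r t))"
      by (rule gauge_Int[OF g1 gauge_ball_dependent]) (simp add: r)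
    obtain p where p: "p tagged_division_of cbox a b" and pf: "(\<lambda>t. \<gamma>1 t \<inter> ball t (r t)) fine p"
      by (rule fine_division_exists[OF g, of a b]) (rule that)
    have pf1: "\<gamma>1 fine p" and pf2: "(\<lambda>t. ball t (r t)) fine p"
      using pf fine_Int[of \<gamma>1 "\<lambda>t. ball t (r t)" p] by simp_all
    have p': "p tagged_division_of {a..b}" using p by simp
    have finp: "finite p" using tagged_division_ofD(1)[OF p] .
    have elem: "\<exists>u v. K = {u..v} \<and> u \<le> t \<and> t \<le> v \<and> a \<le> u \<and> v \<le> b \<and> Inf K = u \<and> Sup K = v \<and> Henstock_Kurzweil_Integration.content K = v - u"
      if tK: "(t, K) \<in> p" for t K
    proof -
      obtain u v where K: "K = cbox u v" using tagged_division_ofD(4)[OF p tK] by blast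
      have "t \<in> K" "K \<subseteq> {a..b}" using tagged_division_ofD(2,3)[OF p tK] by auto
      then have uv: "u \<le> t" "t \<le> v" "a \<le> u" "v \<le> b" using K by auto
      then show ?thesis using K by (intro exI[of _ u] exI[of _ v]) auto
    qed
    define pE where "pE = {tk \<in> p. fst tk \<in> N}"
    define pN where "pN = {tk \<in> p. fst tk \<notin> N}"
    define X where "X = {tk \<in> pE. Inf (snd tk) < Sup (snd tk)}"
    have finE: "finite pE" "finite pN" "finite X" using finp unfolding pE_def pN_def X_def by auto
    define gg where "gg tk = f (Sup (snd tk)) - f (Inf (snd tk))" for tk :: "real \<times> real set"
    define cc where "cc tk = Henstock_Kurzweil_Integration.content (snd tk)" for tk :: "real \<times> real set"
    have pu: "p = pE \<union> pN" "pE \<inter> pN = {}" unfolding pE_def pN_def by auto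
    have "f b - f a = (\<Sum>tk\<in>p. gg tk)"
      using additive_tagged_division_1[OF ab p', of f] by (simp add: split_def gg_def)
    also have "\<dots> = (\<Sum>tk\<in>pE \<union> pN. gg tk)" using pu(1) by simp
    also have "\<dots> = (\<Sum>tk\<in>pE. gg tk) + (\<Sum>tk\<in>pN. gg tk)"
      by (rule sum.union_disjoint[OF finE(1,2) pu(2)])
    finally have fsplit: "f b - f a = (\<Sum>tk\<in>pE. gg tk) + (\<Sum>tk\<in>pN. gg tk)" .
    have s1: "\<bar>\<Sum>tk\<in>pE. gg tk\<bar> \<le> (\<Sum>tk\<in>pE. \<bar>gg tk\<bar>)" by (rule sum_abs)
    have s2: "\<bar>\<Sum>tk\<in>pN. gg tk\<bar> \<le> (\<Sum>tk\<in>pN. \<bar>gg tk\<bar>)" by (rule sum_abs)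
    have split: "\<bar>f b - f a\<bar> \<le> (\<Sum>tk\<in>pE. \<bar>gg tk\<bar>) + (\<Sum>tk\<in>pN. \<bar>gg tk\<bar>)"
      using fsplit s1 s2 by linarith
    have bN: "(\<Sum>tk\<in>pN. \<bar>gg tk\<bar>) \<le> (M + \<epsilon>) * (b - a)"
    proof -
      have "(\<Sum>tk\<in>pN. \<bar>gg tk\<bar>) \<le> (\<Sum>tk\<in>pN. (M + \<epsilon>) * cc tk)"
      proof (rule sum_mono)
        fix tk assume tk: "tk \<in> pN"
        obtain t K where tK: "tk = (t, K)" by (cases tk) auto
        have inp: "(t, K) \<in> p" and tN: "t \<notin> N" using tk tK unfolding pN_def by auto
        obtain u v where uv: "K = {u..v}" "u \<le> t" "t \<le> v" "a \<le> u" "v \<le> b" "Inf K = u" "Sup K = v" "Henstock_Kurzweil_Integration.content K = v - u"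
          using elem[OF inp] by blast
        have ta: "t \<in> {a..b}" using uv by auto
        have Kb: "K \<subseteq> ball t (r t)" using fineD[OF pf2 inp] .
        have "u \<in> K" "v \<in> K" using uv by auto
        then have "u \<in> ball t (r t)" "v \<in> ball t (r t)" using Kb by auto
        then have ur: "\<bar>u - t\<bar> < r t" "\<bar>v - t\<bar> < r t" by (simp_all add: dist_real_def abs_minus_commute)
        have ua: "u \<in> {a..b}" "v \<in> {a..b}" using uv by auto
        have e1: "\<bar>f v - f t - D t * (v - t)\<bar> \<le> \<epsilon> * \<bar>v - t\<bar>" by (rule rr[OF ta tN ua(2) ur(2)])
        have e2: "\<bar>f u - f t - D t * (u - t)\<bar> \<le> \<epsilon> * \<bar>u - t\<bar>" by (rule rr[OF ta tN ua(1) ur(1)])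
        have Dt: "\<bar>D t\<bar> \<le> M" using der[OF ta tN] by (rule conjunct2)
        have a1: "\<bar>v - t\<bar> = v - t" "\<bar>u - t\<bar> = t - u" using uv by auto
        have m1: "\<bar>D t * (v - t)\<bar> = \<bar>D t\<bar> * (v - t)" "\<bar>D t * (u - t)\<bar> = \<bar>D t\<bar> * (t - u)"
          using a1 by (simp_all add: abs_mult)
        have m2: "\<bar>D t\<bar> * (v - t) \<le> M * (v - t)" "\<bar>D t\<bar> * (t - u) \<le> M * (t - u)"
          using uv Dt by (simp_all add: mult_right_mono)
        have k1: "\<bar>f v - f t\<bar> \<le> \<epsilon> * (v - t) + M * (v - t)"
        proof -
          have "\<bar>f v - f t\<bar> \<le> \<bar>f v - f t - D t * (v - t)\<bar> + \<bar>D t * (v - t)\<bar>" by arith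
          also have "\<dots> \<le> \<epsilon> * (v - t) + M * (v - t)"
          proof (rule add_mono)
            show "\<bar>f v - f t - D t * (v - t)\<bar> \<le> \<epsilon> * (v - t)" using e1 a1(1) by simp
            show "\<bar>D t * (v - t)\<bar> \<le> M * (v - t)" using m1(1) m2(1) by simp
          qed
          finally show ?thesis .
        qed
        have k2: "\<bar>f u - f t\<bar> \<le> \<epsilon> * (t - u) + M * (t - u)"
        proof -
          have "\<bar>f u - f t\<bar> \<le> \<bar>f u - f t - D t * (u - t)\<bar> + \<bar>D t * (u - t)\<bar>" by arith
          also have "\<dots> \<le> \<epsilon> * (t - u) + M * (t - u)"
          proof (rule add_mono)
            show "\<bar>f u - f t - D t * (u - t)\<bar> \<le> \<epsilon> * (t - u)" using e2 a1(2) by simp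
            show "\<bar>D t * (u - t)\<bar> \<le> M * (t - u)" using m1(2) m2(2) by simp
          qed
          finally show ?thesis .
        qed
        have k3: "\<bar>f v - f u\<bar> \<le> \<bar>f v - f t\<bar> + \<bar>f u - f t\<bar>" by arith
        have m4: "(M + \<epsilon>) * (v - u) = \<epsilon> * (v - t) + M * (v - t) + (\<epsilon> * (t - u) + M * (t - u))"
          by (simp add: algebra_simps)
        have "\<bar>f v - f u\<bar> \<le> (M + \<epsilon>) * (v - u)"
          unfolding m4 using k1 k2 k3 by linarith
        then show "\<bar>gg tk\<bar> \<le> (M + \<epsilon>) * cc tk"
          using tK uv by (simp add: gg_def cc_def)
      qed
      also have "\<dots> = (M + \<epsilon>) * (\<Sum>tk\<in>pN. cc tk)" by (simp add: sum_distrib_left)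
      also have "\<dots> \<le> (M + \<epsilon>) * (\<Sum>tk\<in>p. cc tk)"
      proof (rule mult_left_mono)
        show "(\<Sum>tk\<in>pN. cc tk) \<le> (\<Sum>tk\<in>p. cc tk)"
          by (rule sum_mono2[OF finp]) (auto simp: pN_def cc_def)
        show "0 \<le> M + \<epsilon>" using M ep by simp
      qed
      also have "(\<Sum>tk\<in>p. cc tk) = b - a"
        using additive_content_tagged_division[OF p] ab by (simp add: split_def cc_def)
      finally show ?thesis .
    qed
    have bE: "(\<Sum>tk\<in>pE. \<bar>gg tk\<bar>) < \<epsilon>"
    proof -
      have "(\<Sum>tk\<in>pE. \<bar>gg tk\<bar>) = (\<Sum>tk\<in>X. \<bar>f (Sup (snd tk)) - f (Inf (snd tk))\<bar>)"
      proof -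
        have xu: "pE = X \<union> (pE - X)" "X \<inter> (pE - X) = {}" "finite (pE - X)" using finE unfolding X_def by auto
        have "(\<Sum>tk\<in>pE. \<bar>gg tk\<bar>) = (\<Sum>tk\<in>X \<union> (pE - X). \<bar>gg tk\<bar>)" using xu(1) by simp
        also have "\<dots> = (\<Sum>tk\<in>X. \<bar>gg tk\<bar>) + (\<Sum>tk\<in>pE - X. \<bar>gg tk\<bar>)"
          by (rule sum.union_disjoint[OF finE(3) xu(3) xu(2)])
        also have "(\<Sum>tk\<in>pE - X. \<bar>gg tk\<bar>) = 0"
        proof (rule sum.neutral, rule ballI)
          fix tk assume tk: "tk \<in> pE - X"
          obtain t K where tK: "tk = (t, K)" by (cases tk) auto
          have inp: "(t,K) \<in> p" and nl: "\<not> Inf K < Sup K" using tk tK unfolding X_def pE_def by auto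
          obtain u v where uv: "u \<le> t" "t \<le> v" "Inf K = u" "Sup K = v" using elem[OF inp] by blast
          then have "Inf K = Sup K" using nl by linarith
          then show "\<bar>gg tk\<bar> = 0" using tK by (simp add: gg_def)
        qed
        finally show ?thesis by (simp add: gg_def)
      qed
      also have "\<dots> < \<epsilon>"
      proof -
        have elX: "\<exists>t K u v. i = (t, K) \<and> (t, K) \<in> p \<and> t \<in> N \<and> K = {u..v} \<and> a \<le> u \<and> u < v \<and> v \<le> b \<and> Inf K = u \<and> Sup K = v
                   \<and> Henstock_Kurzweil_Integration.content K = v - u" if iX: "i \<in> X" for i
        proof -
          obtain t K where tK: "i = (t, K)" by (cases i) auto
          have inp: "(t,K) \<in> p" and lt: "Inf K < Sup K" and tN: "t \<in> N" using iX tK unfolding X_def pE_def by auto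
          obtain u v where uv: "K = {u..v}" "a \<le> u" "v \<le> b" "Inf K = u" "Sup K = v"
              "Henstock_Kurzweil_Integration.content K = v - u" using elem[OF inp] by blast
          have "u < v" using lt uv by simp
          then show ?thesis using tK inp tN uv by blast
        qed
        have h1: "\<forall>i\<in>X. a \<le> Inf (snd i) \<and> Inf (snd i) < Sup (snd i) \<and> Sup (snd i) \<le> b"
        proof
          fix i assume "i \<in> X"
          then obtain t K u v where "i = (t, K)" "a \<le> u" "u < v" "v \<le> b" "Inf K = u" "Sup K = v"
            using elX by blast
          then show "a \<le> Inf (snd i) \<and> Inf (snd i) < Sup (snd i) \<and> Sup (snd i) \<le> b" by simp
        qed
        have h2: "\<forall>i\<in>X. \<forall>j\<in>X. i \<noteq> j \<longrightarrow> {Inf (snd i)<..<Sup (snd i)} \<inter> {Inf (snd j)<..<Sup (snd j)} = {}"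
        proof (intro ballI impI)
          fix i j assume iX: "i \<in> X" and jX: "j \<in> X" and ne: "i \<noteq> j"
          obtain ti Ki ui vi where ei: "i = (ti, Ki)" "(ti, Ki) \<in> p" "Ki = {ui..vi}" "Inf Ki = ui" "Sup Ki = vi"
            using elX[OF iX] by blast
          obtain tj Kj uj vj where ej: "j = (tj, Kj)" "(tj, Kj) \<in> p" "Kj = {uj..vj}" "Inf Kj = uj" "Sup Kj = vj"
            using elX[OF jX] by blast
          have "interior Ki \<inter> interior Kj = {}"
            using tagged_division_ofD(5)[OF p ei(2) ej(2)] ne ei(1) ej(1) by simp
          then show "{Inf (snd i)<..<Sup (snd i)} \<inter> {Inf (snd j)<..<Sup (snd j)} = {}"
            using ei ej by simp
        qed
        have h3: "(\<Sum>i\<in>X. Sup (snd i) - Inf (snd i)) < d"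
        proof -
          have "(\<Sum>i\<in>X. Sup (snd i) - Inf (snd i)) = (\<Sum>i\<in>X. Henstock_Kurzweil_Integration.content (snd i) * indicat_real N (fst i))"
          proof (rule sum.cong)
            fix i assume "i \<in> X"
            then obtain t K u v where "i = (t, K)" "t \<in> N" "Inf K = u" "Sup K = v"
                "Henstock_Kurzweil_Integration.content K = v - u"
              using elX by blast
            then show "Sup (snd i) - Inf (snd i) = Henstock_Kurzweil_Integration.content (snd i) * indicat_real N (fst i)"
              by simp
          qed simp
          also have "\<dots> \<le> (\<Sum>i\<in>p. Henstock_Kurzweil_Integration.content (snd i) * indicat_real N (fst i))"
          proof (rule sum_mono2[OF finp])
            show "X \<subseteq> p" unfolding X_def pE_def by auto
            fix i assume "i \<in> p - X"
            then show "0 \<le> Henstock_Kurzweil_Integration.content (snd i) * indicat_real N (fst i)"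
              by simp
          qed
          also have "\<dots> = (\<Sum>(x, k)\<in>p. Henstock_Kurzweil_Integration.content k *\<^sub>R indicat_real N x)"
            by (simp add: split_def)
          also have "\<dots> < d" using g1p[OF p pf1] by simp
          finally show ?thesis .
        qed
        show ?thesis using dd[of X "\<lambda>i. Inf (snd i)" "\<lambda>i. Sup (snd i)", OF finE(3) h1[rule_format] h2[rule_format] h3] .
      qed
      finally show ?thesis .
    qed
    show ?thesis using split bN bE by linarith
  qed
  show ?thesis
  proof (rule field_le_epsilon)
    fix e :: real assume e: "e > 0"
    define \<epsilon> where "\<epsilon> = e / (b - a + 1)"
    have ep: "\<epsilon> > 0" using e ab by (simp add: \<epsilon>_def)
    have eq: "\<epsilon> * (b - a + 1) = e" using ab unfolding \<epsilon>_def by (simp add: field_simps)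
    have "(M + \<epsilon>) * (b - a) + \<epsilon> = M * (b - a) + \<epsilon> * (b - a + 1)" by (simp add: algebra_simps)
    then show "\<bar>f b - f a\<bar> \<le> M * (b - a) + e" using main[OF ep] eq by linarith
  qed
qed



lemma ac_sub:
  assumes ac: "abs_cont_on a b f" and h1: "a \<le> a'" and h2: "b' \<le> b"
  shows "abs_cont_on a' b' f"
  unfolding abs_cont_on_def
proof (intro allI impI)
  fix e :: real assume e: "e > 0"
  have "\<exists>d>0. \<forall>(n::nat) (x::nat \<Rightarrow> real) (y::nat \<Rightarrow> real).
        (\<forall>i<n. a \<le> x i \<and> x i \<le> y i \<and> y i \<le> b) \<and>
        (\<forall>i<n. \<forall>j<n. i < j \<longrightarrow> y i \<le> x j) \<and>
        (\<Sum>i<n. y i - x i) < d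
        \<longrightarrow> (\<Sum>i<n. \<bar>f (y i) - f (x i)\<bar>) < e"
    using ac[unfolded abs_cont_on_def, rule_format, OF e] .
  then obtain d where d: "d > 0" and H: "\<forall>(n::nat) (x::nat \<Rightarrow> real) (y::nat \<Rightarrow> real).
        (\<forall>i<n. a \<le> x i \<and> x i \<le> y i \<and> y i \<le> b) \<and>
        (\<forall>i<n. \<forall>j<n. i < j \<longrightarrow> y i \<le> x j) \<and>
        (\<Sum>i<n. y i - x i) < d
        \<longrightarrow> (\<Sum>i<n. \<bar>f (y i) - f (x i)\<bar>) < e"
    by blast
  show "\<exists>d>0. \<forall>(n::nat) (x::nat \<Rightarrow> real) (y::nat \<Rightarrow> real).
        (\<forall>i<n. a' \<le> x i \<and> x i \<le> y i \<and> y i \<le> b') \<and>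
        (\<forall>i<n. \<forall>j<n. i < j \<longrightarrow> y i \<le> x j) \<and>
        (\<Sum>i<n. y i - x i) < d
        \<longrightarrow> (\<Sum>i<n. \<bar>f (y i) - f (x i)\<bar>) < e"
  proof (intro exI[of _ d] conjI allI impI)
    show "d > 0" by (rule d)
    fix n :: nat and x y :: "nat \<Rightarrow> real"
    assume P: "(\<forall>i<n. a' \<le> x i \<and> x i \<le> y i \<and> y i \<le> b') \<and>
        (\<forall>i<n. \<forall>j<n. i < j \<longrightarrow> y i \<le> x j) \<and> (\<Sum>i<n. y i - x i) < d"
    have "\<forall>i<n. a \<le> x i \<and> x i \<le> y i \<and> y i \<le> b"
    proof (intro allI impI)
      fix i assume "i < n"
      then have "a' \<le> x i \<and> x i \<le> y i \<and> y i \<le> b'" using P by blast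
      then show "a \<le> x i \<and> x i \<le> y i \<and> y i \<le> b" using h1 h2 by auto
    qed
    then show "(\<Sum>i<n. \<bar>f (y i) - f (x i)\<bar>) < e" using H P by blast
  qed
qed

lemma ac_cont:
  assumes ac: "abs_cont_on a b f"
  shows "continuous_on {a..b} f"
  unfolding continuous_on_iff
proof (intro ballI allI impI)
  fix x e :: real assume x: "x \<in> {a..b}" and e: "e > 0"
  have "\<exists>d>0. \<forall>(n::nat) (x::nat \<Rightarrow> real) (y::nat \<Rightarrow> real).
        (\<forall>i<n. a \<le> x i \<and> x i \<le> y i \<and> y i \<le> b) \<and>
        (\<forall>i<n. \<forall>j<n. i < j \<longrightarrow> y i \<le> x j) \<and>
        (\<Sum>i<n. y i - x i) < d
        \<longrightarrow> (\<Sum>i<n. \<bar>f (y i) - f (x i)\<bar>) < e"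
    using ac[unfolded abs_cont_on_def, rule_format, OF e] .
  then obtain d where d: "d > 0" and H: "\<forall>(n::nat) (x::nat \<Rightarrow> real) (y::nat \<Rightarrow> real).
        (\<forall>i<n. a \<le> x i \<and> x i \<le> y i \<and> y i \<le> b) \<and>
        (\<forall>i<n. \<forall>j<n. i < j \<longrightarrow> y i \<le> x j) \<and>
        (\<Sum>i<n. y i - x i) < d
        \<longrightarrow> (\<Sum>i<n. \<bar>f (y i) - f (x i)\<bar>) < e"
    by blast
  show "\<exists>d>0. \<forall>x'\<in>{a..b}. dist x' x < d \<longrightarrow> dist (f x') (f x) < e"
  proof (intro exI[of _ d] conjI ballI impI)
    show "d > 0" by (rule d)
    fix x' assume x': "x' \<in> {a..b}" and dx: "dist x' x < d"
    define xs :: "nat \<Rightarrow> real" where "xs i = min x x'" for i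
    define ys :: "nat \<Rightarrow> real" where "ys i = max x x'" for i
    have c1: "\<forall>i<1. a \<le> xs i \<and> xs i \<le> ys i \<and> ys i \<le> b" using x x' by (auto simp: xs_def ys_def)
    have c2: "\<forall>i<1. \<forall>j<1. i < j \<longrightarrow> ys i \<le> xs j" by simp
    have c3: "(\<Sum>i<1. ys i - xs i) < d" using dx by (simp add: xs_def ys_def dist_real_def)
    have "(\<Sum>i<(1::nat). \<bar>f (ys i) - f (xs i)\<bar>) < e" using H c1 c2 c3 by blast
    then have "\<bar>f (max x x') - f (min x x')\<bar> < e" by (simp add: xs_def ys_def)
    then show "dist (f x') (f x) < e" by (cases "x \<le> x'") (simp_all add: dist_real_def abs_minus_commute)
  qed
qed

lemma zero_step:
  fixes f D :: "real \<Rightarrow> real"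
  assumes K: "K > 0" and cb: "c \<le> b" and ac: "abs_cont_on c b f" and negN: "negligible N"
    and der: "\<And>t. t \<in> {c..b} \<Longrightarrow> t \<notin> N \<Longrightarrow>
        (f has_real_derivative D t) (at t within {c..b}) \<and> \<bar>D t\<bar> \<le> K * \<bar>f t\<bar>"
    and s: "c \<le> s0" "s0 \<le> s1" "s1 \<le> b" "K * (s1 - s0) \<le> 1 / 2" and f0: "f s0 = 0"
  shows "\<forall>t\<in>{s0..s1}. f t = 0"
proof -
  have ac1: "abs_cont_on s0 s1 f" using ac_sub[OF ac s(1) s(3)] .
  have cont: "continuous_on {s0..s1} (\<lambda>t. \<bar>f t\<bar>)"
    using continuous_on_rabs[OF ac_cont[OF ac1]] .
  have ne: "{s0..s1} \<noteq> {}" using s(2) by simp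
  obtain tm where tm: "tm \<in> {s0..s1}" and mx: "\<forall>y\<in>{s0..s1}. \<bar>f y\<bar> \<le> \<bar>f tm\<bar>"
    using continuous_attains_sup[OF compact_Icc ne cont] by blast
  define m where "m = \<bar>f tm\<bar>"
  have m0: "m \<ge> 0" unfolding m_def by simp
  have bound: "\<bar>f t\<bar> \<le> m / 2" if t: "t \<in> {s0..s1}" for t
  proof -
    have st: "s0 \<le> t" "t \<le> s1" using t by auto
    have act: "abs_cont_on s0 t f" using ac_sub[OF ac1 order_refl st(2)] .
    have dd: "(f has_real_derivative D u) (at u within {s0..t}) \<and> \<bar>D u\<bar> \<le> K * m"
      if u: "u \<in> {s0..t}" "u \<notin> N" for u
    proof
      have u1: "u \<in> {c..b}" using u s st by auto
      have sub: "{s0..t} \<subseteq> {c..b}" using s st by auto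
      show "(f has_real_derivative D u) (at u within {s0..t})"
        using DERIV_subset[OF conjunct1[OF der[OF u1 u(2)]] sub] .
      have "\<bar>f u\<bar> \<le> m" unfolding m_def using mx u st by auto
      then have "K * \<bar>f u\<bar> \<le> K * m" using K by (simp add: mult_left_mono)
      then show "\<bar>D u\<bar> \<le> K * m" using conjunct2[OF der[OF u1 u(2)]] by linarith
    qed
    have "\<bar>f t - f s0\<bar> \<le> (K * m) * (t - s0)"
      by (rule lip[OF st(1) act negN _ dd]) (use K m0 in simp)
    also have "\<dots> = m * (K * (t - s0))" by (simp add: algebra_simps)
    also have "\<dots> \<le> m * (1 / 2)"
    proof (rule mult_left_mono[OF _ m0])
      have "K * (t - s0) \<le> K * (s1 - s0)" using K st by (simp add: mult_left_mono)
      then show "K * (t - s0) \<le> 1 / 2" using s(4) by linarith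
    qed
    finally show ?thesis using f0 by simp
  qed
  have "m \<le> m / 2" using bound[OF tm] unfolding m_def .
  then have m00: "m = 0" using m0 by linarith
  show ?thesis
  proof
    fix t assume "t \<in> {s0..s1}"
    then have "\<bar>f t\<bar> \<le> m" unfolding m_def using mx by blast
    then show "f t = 0" using m00 by simp
  qed
qed

lemma zero_prop:
  fixes f D :: "real \<Rightarrow> real"
  assumes K: "K > 0" and cb: "c \<le> b" and ac: "abs_cont_on c b f" and negN: "negligible N"
    and der: "\<And>t. t \<in> {c..b} \<Longrightarrow> t \<notin> N \<Longrightarrow>
        (f has_real_derivative D t) (at t within {c..b}) \<and> \<bar>D t\<bar> \<le> K * \<bar>f t\<bar>"
    and f0: "f c = 0"
  shows "f b = 0"
proof -
  define h where "h = 1 / (2 * K)"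
  have h0: "h > 0" unfolding h_def using K by simp
  have Kh: "K * h = 1 / 2" unfolding h_def using K by simp
  have ind: "\<forall>t\<in>{c..min b (c + real n * h)}. f t = 0" for n
  proof (induction n)
    case 0
    have "min b c = c" using cb by simp
    then show ?case using f0 by simp
  next
    case (Suc n)
    define s0 where "s0 = min b (c + real n * h)"
    define s1 where "s1 = min b (c + real (Suc n) * h)"
    have nh: "real n * h \<ge> 0" using h0 by simp
    have eq: "real (Suc n) * h = real n * h + h" by (simp add: algebra_simps)
    have le: "c \<le> s0" "s0 \<le> s1" "s1 \<le> b" unfolding s0_def s1_def eq using cb h0 nh by (auto simp: min_def)
    have "s1 - s0 \<le> h" unfolding s0_def s1_def eq using cb h0 nh by (auto simp: min_def)
    then have "K * (s1 - s0) \<le> K * h" using K by (simp add: mult_left_mono)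
    then have kk: "K * (s1 - s0) \<le> 1 / 2" using Kh by simp
    have fs0: "f s0 = 0" using Suc.IH le(1) unfolding s0_def by auto
    have z: "\<forall>t\<in>{s0..s1}. f t = 0" by (rule zero_step[OF K cb ac negN der le kk fs0])
    show ?case
    proof
      fix t assume t: "t \<in> {c..min b (c + real (Suc n) * h)}"
      show "f t = 0"
      proof (cases "t \<le> s0")
        case True
        then show ?thesis using Suc.IH t unfolding s0_def by auto
      next
        case False
        then show ?thesis using z t unfolding s1_def by auto
      qed
    qed
  qed
  obtain n :: nat where n: "(b - c) / h \<le> real n" using real_arch_simple by blast
  then have "b - c \<le> real n * h" using h0 by (simp add: field_simps)
  then have "b \<in> {c..min b (c + real n * h)}" using cb by auto
  then show ?thesis using ind by blast
qed



theorem proposition7: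
  fixes bmin bmax gmin gmax Imax t0 tbar :: real
    and S I lam1 lam2 gbar :: "real \<Rightarrow> real"
  assumes params: "0 < bmin" "bmin \<le> bmax" "0 < gmin" "gmin \<le> gmax" "0 < Imax" "Imax \<le> 1"
    and times: "t0 < tbar"
    and gbar_meas: "gbar \<in> borel_measurable (restrict_space lebesgue {t0..})"
    and gbar_range: "\<forall>t\<ge>t0. gmin \<le> gbar t \<and> gbar t \<le> gmax"
    and ac_state: "abs_cont_on t0 tbar S" "abs_cont_on t0 tbar I"
    and ode_state: "AE t in lebesgue. t \<in> {t0..tbar} \<longrightarrow>
        (S has_real_derivative (- beta_hat bmin bmax Imax (I t) * S t * I t)) (at t within {t0..tbar}) \<and>
        (I has_real_derivative (beta_hat bmin bmax Imax (I t) * S t * I t - gbar t * I t)) (at t within {t0..tbar})"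
    and in_constraint: "\<forall>t\<in>{t0..tbar}. 0 \<le> I t \<and> I t \<le> Imax"
    and hit: "I tbar = Imax"
    and tangent: "(SUP g\<in>{gmin..gmax}. beta_hat bmin bmax Imax (I tbar) * S tbar * I tbar - g * I tbar) = 0"
    and ac_adj: "abs_cont_on t0 tbar lam1" "abs_cont_on t0 tbar lam2"
    and ode_adj: "AE t in lebesgue. t \<in> {t0..tbar} \<longrightarrow>
        (lam1 has_real_derivative
           (beta_hat bmin bmax Imax (I t) * I t * lam1 t - beta_hat bmin bmax Imax (I t) * I t * lam2 t))
           (at t within {t0..tbar}) \<and>
        (lam2 has_real_derivative
           (alpha_fun bmin bmax Imax (I t) * S t * lam1 t
            + (- alpha_fun bmin bmax Imax (I t) * S t + gbar t) * lam2 t))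
           (at t within {t0..tbar})"
    and adj_nonzero: "\<forall>t\<in>{t0..tbar}. (lam1 t, lam2 t) \<noteq> (0, 0)"
    and adj_final: "lam1 tbar = 0" "lam2 tbar = 1"
    and input_pos: "\<forall>t\<in>{t0..tbar}. lam2 t > 0 \<longrightarrow> gbar t = gmin"
    and input_neg: "\<forall>t\<in>{t0..tbar}. lam2 t < 0 \<longrightarrow> gbar t = gmax"
    and z1_nonzero: "S tbar \<noteq> 0"
    and beta_cond: "2 * bmin > bmax"
  shows "\<forall>a b. t0 \<le> a \<and> a < b \<and> b \<le> tbar \<longrightarrow> \<not> (\<forall>t\<in>{a<..<b}. lam2 t = 0)"
proof (intro allI impI notI)
  fix a b assume ab: "t0 \<le> a \<and> a < b \<and> b \<le> tbar" and z: "\<forall>t\<in>{a<..<b}. lam2 t = 0"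
  have ab1: "t0 \<le> a" "a < b" "b \<le> tbar" using ab by auto
  define P1 where "P1 t \<longleftrightarrow> (t \<in> {t0..tbar} \<longrightarrow>
        (lam1 has_real_derivative
           (beta_hat bmin bmax Imax (I t) * I t * lam1 t - beta_hat bmin bmax Imax (I t) * I t * lam2 t))
           (at t within {t0..tbar}) \<and>
        (lam2 has_real_derivative
           (alpha_fun bmin bmax Imax (I t) * S t * lam1 t
            + (- alpha_fun bmin bmax Imax (I t) * S t + gbar t) * lam2 t))
           (at t within {t0..tbar}))" for t
  define P2 where "P2 t \<longleftrightarrow> (t \<in> {t0..tbar} \<longrightarrow>
        (S has_real_derivative (- beta_hat bmin bmax Imax (I t) * S t * I t)) (at t within {t0..tbar}) \<and>
        (I has_real_derivative (beta_hat bmin bmax Imax (I t) * S t * I t - gbar t * I t)) (at t within {t0..tbar}))" for t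
  have "AE t in lebesgue. P1 t" using ode_adj unfolding P1_def .
  then obtain N1 where N1: "{x \<in> space lebesgue. \<not> P1 x} \<subseteq> N1" "emeasure lebesgue N1 = 0" "N1 \<in> sets lebesgue"
    by (rule AE_E)
  have "AE t in lebesgue. P2 t" using ode_state unfolding P2_def .
  then obtain N2 where N2: "{x \<in> space lebesgue. \<not> P2 x} \<subseteq> N2" "emeasure lebesgue N2 = 0" "N2 \<in> sets lebesgue"
    by (rule AE_E)
  have neg1: "negligible N1" using N1(2,3) by (simp add: negligible_iff_null_sets null_sets_def)
  have neg2: "negligible N2" using N2(2,3) by (simp add: negligible_iff_null_sets null_sets_def)
  have P1I: "P1 t" if "t \<notin> N1" for t
  proof (rule ccontr)
    assume "\<not> P1 t"
    then have "t \<in> {x \<in> space lebesgue. \<not> P1 x}" by simp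
    then show False using N1(1) that by blast
  qed
  have P2I: "P2 t" if "t \<notin> N2" for t
  proof (rule ccontr)
    assume "\<not> P2 t"
    then have "t \<in> {x \<in> space lebesgue. \<not> P2 x}" by simp
    then show False using N2(1) that by blast
  qed
  have "\<not> {a<..<b} \<subseteq> N1 \<union> N2"
  proof
    assume "{a<..<b} \<subseteq> N1 \<union> N2"
    moreover have "negligible (N1 \<union> N2)" using neg1 neg2 by (rule negligible_Un)
    ultimately have "negligible {a<..<b}" by (rule negligible_subset[rotated])
    then have "negligible (box a b)" by (simp add: box_real)
    then have "box a b = {}" by (simp only: negligible_interval)
    then show False using ab1(2) by (simp add: box_real)
  qed
  then obtain c where c: "c \<in> {a<..<b}" "c \<notin> N1" "c \<notin> N2" by blast
  have cT: "c \<in> {t0..tbar}" using c(1) ab1 by auto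
  have l2c: "lam2 c = 0" using z c(1) by blast
  have d2: "(lam2 has_real_derivative
           (alpha_fun bmin bmax Imax (I c) * S c * lam1 c
            + (- alpha_fun bmin bmax Imax (I c) * S c + gbar c) * lam2 c))
           (at c within {t0..tbar})"
    using P1I[OF c(2)] cT unfolding P1_def by blast
  have sub: "{a<..<b} \<subseteq> {t0..tbar}" using ab1 by auto
  have d2': "(lam2 has_real_derivative
           (alpha_fun bmin bmax Imax (I c) * S c * lam1 c
            + (- alpha_fun bmin bmax Imax (I c) * S c + gbar c) * lam2 c)) (at c)"
    using DERIV_subset[OF d2 sub] at_within_open[OF c(1) open_greaterThanLessThan] by simp
  have d0: "((\<lambda>_. 0) has_real_derivative
           (alpha_fun bmin bmax Imax (I c) * S c * lam1 c
            + (- alpha_fun bmin bmax Imax (I c) * S c + gbar c) * lam2 c)) (at c)"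
    by (rule has_field_derivative_transform_within_open[OF d2' open_greaterThanLessThan c(1)]) (use z in simp)
  have "alpha_fun bmin bmax Imax (I c) * S c * lam1 c
            + (- alpha_fun bmin bmax Imax (I c) * S c + gbar c) * lam2 c = 0"
    using DERIV_unique[OF d0 DERIV_const] .
  then have prod0: "alpha_fun bmin bmax Imax (I c) * S c * lam1 c = 0" using l2c by simp
  have l1c: "lam1 c \<noteq> 0" using adj_nonzero cT l2c by auto
  have Ic: "0 \<le> I c" "I c \<le> Imax" using in_constraint cT by auto
  have q01: "0 \<le> I c / Imax" "I c / Imax \<le> 1" using Ic params(5) by auto
  define X where "X = (bmin - bmax) * (I c / Imax)"
  have x1: "bmin - bmax \<le> X"
    unfolding X_def using q01(2) params(2) mult_left_mono_neg[of "I c / Imax" 1 "bmin - bmax"] by simp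
  have e1: "alpha_fun bmin bmax Imax (I c) = 2 * X + bmax"
    unfolding alpha_fun_def X_def by simp
  have alpha_pos: "alpha_fun bmin bmax Imax (I c) > 0"
    using x1 e1 beta_cond by linarith
  have Sc: "S c = 0" using prod0 l1c alpha_pos by simp
  define K where "K = bmax + 1"
  have K0: "K > 0" unfolding K_def using params by simp
  have ctb: "c \<le> tbar" using cT by simp
  have acS: "abs_cont_on c tbar S" using ac_sub[OF ac_state(1)] cT by simp
  have derS: "(S has_real_derivative (- beta_hat bmin bmax Imax (I t) * S t * I t)) (at t within {c..tbar})
      \<and> \<bar>- beta_hat bmin bmax Imax (I t) * S t * I t\<bar> \<le> K * \<bar>S t\<bar>"
    if t: "t \<in> {c..tbar}" "t \<notin> N2" for t
  proof
    have tT: "t \<in> {t0..tbar}" using t cT by auto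
    have sub2: "{c..tbar} \<subseteq> {t0..tbar}" using cT by auto
    have "(S has_real_derivative (- beta_hat bmin bmax Imax (I t) * S t * I t)) (at t within {t0..tbar})"
      using P2I[OF t(2)] tT unfolding P2_def by blast
    then show "(S has_real_derivative (- beta_hat bmin bmax Imax (I t) * S t * I t)) (at t within {c..tbar})"
      using sub2 by (rule DERIV_subset)
    have It: "0 \<le> I t" "I t \<le> Imax" using in_constraint tT by auto
    have q: "0 \<le> I t / Imax" "I t / Imax \<le> 1" using It params(5) by auto
    have "(bmin - bmax) * 1 \<le> (bmin - bmax) * (I t / Imax)"
      using q(2) params(2) by (intro mult_left_mono_neg) auto
    moreover have "(bmin - bmax) * (I t / Imax) \<le> 0"
      using q(1) params(2) by (intro mult_nonpos_nonneg) auto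
    ultimately have bh: "0 \<le> beta_hat bmin bmax Imax (I t)" "beta_hat bmin bmax Imax (I t) \<le> bmax"
      unfolding beta_hat_def using params by (simp_all add: algebra_simps)
    have I1: "I t \<le> 1" using It params(6) by linarith
    have "beta_hat bmin bmax Imax (I t) * I t \<le> bmax * 1"
      using bh It(1) I1 by (intro mult_mono) auto
    moreover have "0 \<le> beta_hat bmin bmax Imax (I t) * I t" using bh It by simp
    ultimately have bi: "\<bar>beta_hat bmin bmax Imax (I t) * I t\<bar> \<le> K" unfolding K_def by simp
    have "\<bar>- beta_hat bmin bmax Imax (I t) * S t * I t\<bar> = \<bar>beta_hat bmin bmax Imax (I t) * I t\<bar> * \<bar>S t\<bar>"
      by (simp add: abs_mult)
    also have "\<dots> \<le> K * \<bar>S t\<bar>" using bi by (simp add: mult_right_mono)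
    finally show "\<bar>- beta_hat bmin bmax Imax (I t) * S t * I t\<bar> \<le> K * \<bar>S t\<bar>" .
  qed
  have "S tbar = 0" by (rule zero_prop[OF K0 ctb acS neg2 derS Sc])
  then show False using z1_nonzero by simp
qed


end
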